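(* Let $r\in\mathbb Z_n$, $1\le j\le\frac{n-1}2$, let $\mathbf w\ne0$ be a row vector with $\mathbf wZ=q^{2r}\mathbf w$, and write $\mathcal U_k=\mathcal U_k(q^j+q^{-j})$, $\mathcal L_k=\mathcal L_k(q^j+q^{-j})$. Set $\mathbf y_0=\mathbf w$, $\mathbf y_1=q^r\mathcal U_1\mathbf w+\mathbf w$, and $\mathbf y_k=q^{kr}(\mathcal U_k-\mathcal U_{k-2})\mathbf w+k\,q^{(k-1)r}\mathcal U_{k-1}\mathbf w$ for $2\le k\le n-1$. Then $\mathbf y_{j,r}=[\mathbf y_{n-1}\ \cdots\ \mathbf y_1\ \mathbf y_0]$ satisfies $$\mathbf y_{j,r}M=\lambda_{j,r}\mathbf y_{j,r}+\mathbf w_{j,r},\qquad \mathbf w_{j,r}=[q^{(n-1)r}\mathcal L_{n-1}\mathbf w\ \cdots\ q^r\mathcal L_1\mathbf w\ \ \mathbf w],$$ where $\lambda_{j,r}=q^r(q^j+q^{-j})$ and $\mathbf w_{j,r}$ is a left eigenvector of $M$ for $\lambda_{j,r}$.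
   Context: $n\ge3$ odd, $q$ a primitive $n$-th root of unity in $\mathbb C$. $I$ is the $n\times n$ identity, $Z$ the $n\times n$ cyclic permutation matrix with $(Zu)_i=u_{i+1}$ (indices mod $n$). $M$ is the $n^2\times n^2$ block matrix of $n\times n$ blocks $M_{ab}$ ($0\le a,b\le n-1$) with $M_{a,a+1}=I$ ($0\le a\le n-2$), $M_{a,a-1}=Z$ ($1\le a\le n-2$), $M_{n-1,0}=2I$, $M_{n-1,n-2}=2Z$, other blocks zero; row vectors of length $n^2$ are written as $n$ blocks matching this structure. $\mathcal U_k$: $\mathcal U_0=1$, $\mathcal U_1=t$, $\mathcal U_k=t\mathcal U_{k-1}-\mathcal U_{k-2}$. $\mathcal L_k$: $\mathcal L_0=2$, $\mathcal L_1=t$, $\mathcal L_k=t\mathcal L_{k-1}-\mathcal L_{k-2}$. *)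

theory Defs
  imports "HOL-Analysis.Analysis"
begin

(* Vectors of length N are functions nat => complex (only indices < N matter);
   matrices N x N are functions nat => nat => complex. *)

definition primitive_root :: "nat \<Rightarrow> complex \<Rightarrow> bool" where
  "primitive_root n q \<longleftrightarrow> q ^ n = 1 \<and> (\<forall>k. 0 < k \<and> k < n \<longrightarrow> q ^ k \<noteq> 1)"

definition rowmul :: "nat \<Rightarrow> (nat \<Rightarrow> complex) \<Rightarrow> (nat \<Rightarrow> nat \<Rightarrow> complex) \<Rightarrow> nat \<Rightarrow> complex" where
  "rowmul N v A = (\<lambda>c. \<Sum>r<N. v r * A r c)"

definition Imat :: "nat \<Rightarrow> nat \<Rightarrow> complex" where
  "Imat i k = (if i = k then 1 else 0)"

definition Zmat :: "nat \<Rightarrow> nat \<Rightarrow> nat \<Rightarrow> complex" where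
  "Zmat n i k = (if k = (i + 1) mod n then 1 else 0)"

definition Mblock :: "nat \<Rightarrow> nat \<Rightarrow> nat \<Rightarrow> nat \<Rightarrow> nat \<Rightarrow> complex" where
  "Mblock n a b i k =
     (if a \<le> n - 2 \<and> b = a + 1 then Imat i k
      else if 1 \<le> a \<and> a \<le> n - 2 \<and> b + 1 = a then Zmat n i k
      else if a = n - 1 \<and> b = 0 then 2 * Imat i k
      else if a = n - 1 \<and> b = n - 2 then 2 * Zmat n i k
      else 0)"

definition Mmat :: "nat \<Rightarrow> nat \<Rightarrow> nat \<Rightarrow> complex" where
  "Mmat n p s = Mblock n (p div n) (s div n) (p mod n) (s mod n)"

fun chebU :: "complex \<Rightarrow> nat \<Rightarrow> complex" where
  "chebU t 0 = 1"
| "chebU t (Suc 0) = t"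
| "chebU t (Suc (Suc k)) = t * chebU t (Suc k) - chebU t k"

fun chebL :: "complex \<Rightarrow> nat \<Rightarrow> complex" where
  "chebL t 0 = 2"
| "chebL t (Suc 0) = t"
| "chebL t (Suc (Suc k)) = t * chebL t (Suc k) - chebL t k"

definition yblock :: "complex \<Rightarrow> nat \<Rightarrow> nat \<Rightarrow> (nat \<Rightarrow> complex) \<Rightarrow> nat \<Rightarrow> nat \<Rightarrow> complex" where
  "yblock q j r w k =
     (let t = q ^ j + inverse (q ^ j) in
      if k = 0 then w
      else if k = 1 then (\<lambda>i. q ^ r * chebU t 1 * w i + w i)
      else (\<lambda>i. q ^ (k * r) * (chebU t k - chebU t (k - 2)) * w i
                + of_nat k * q ^ ((k - 1) * r) * chebU t (k - 1) * w i))"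

(* y_{j,r} = [y_{n-1} ... y_1 y_0]: block a is y_{n-1-a} *)
definition yvec :: "nat \<Rightarrow> complex \<Rightarrow> nat \<Rightarrow> nat \<Rightarrow> (nat \<Rightarrow> complex) \<Rightarrow> nat \<Rightarrow> complex" where
  "yvec n q j r w p = yblock q j r w (n - 1 - p div n) (p mod n)"

definition wvec :: "nat \<Rightarrow> complex \<Rightarrow> nat \<Rightarrow> nat \<Rightarrow> (nat \<Rightarrow> complex) \<Rightarrow> nat \<Rightarrow> complex" where
  "wvec n q j r w p =
     (let a = p div n; i = p mod n; k = n - 1 - a; t = q ^ j + inverse (q ^ j) in
      if a = n - 1 then w i else q ^ (k * r) * chebL t k * w i)"

definition lam :: "complex \<Rightarrow> nat \<Rightarrow> nat \<Rightarrow> complex" where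
  "lam q j r = q ^ r * (q ^ j + inverse (q ^ j))"

end

theory Submission
  imports Defs
begin

lemma blocksum: fixes m n :: nat and g :: "nat \<Rightarrow> complex" shows "(\<Sum>p<m*n. g p) = (\<Sum>a<m. \<Sum>k<n. g (a*n+k) :: complex)"
proof -
  have "(\<Sum>p<m*n. g p) = (\<Sum>a<m. sum g {a*n..<a*n+n})"
    using sum.nat_group[of g n m] by simp
  also have "\<dots> = (\<Sum>a<m. \<Sum>k<n. g (a*n+k))"
  proof (rule sum.cong[OF refl])
    fix a
    show "sum g {a*n..<a*n+n} = (\<Sum>k<n. g (a*n+k))"
      using sum.shift_bounds_nat_ivl[of g 0 "a*n" n]
      by (simp add: atLeast0LessThan add.commute)
  qed
  finally show ?thesis .
qed

definition mco :: "nat \<Rightarrow> complex \<Rightarrow> nat \<Rightarrow> nat \<Rightarrow> complex" where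
  "mco n Z2 a b =
     (if a \<le> n - 2 \<and> b = a + 1 then 1
      else if 1 \<le> a \<and> a \<le> n - 2 \<and> b + 1 = a then Z2
      else if a = n - 1 \<and> b = 0 then 2
      else if a = n - 1 \<and> b = n - 2 then 2 * Z2
      else 0)"

lemma sum_if_const: "(\<Sum>k\<in>A. w k * (if P then X k else Y k)) = (if P then (\<Sum>k\<in>A. w k * X k) else (\<Sum>k\<in>A. w k * (Y k::complex)))"
  by simp

lemma inner:
  assumes "i < n" and hw: "\<forall>i<n. rowmul n w (Zmat n) i = Z2 * w i"
  shows "(\<Sum>k<n. w k * Mblock n a b k i) = mco n Z2 a b * w i"
proof -
  have "(\<lambda>k. w k * Imat k i) = (\<lambda>k. if k = i then w k else 0)" by (auto simp: Imat_def)
  have "(\<Sum>k<n. w k * Imat k i) = (\<Sum>k<n. if k = i then w k else 0)"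
    by (rule sum.cong) (auto simp: Imat_def)
  then have hI: "(\<Sum>k<n. w k * Imat k i) = w i" using assms(1) by simp
  have hZ: "(\<Sum>k<n. w k * Zmat n k i) = Z2 * w i" using hw assms(1) by (simp add: rowmul_def)
  have hI2: "(\<Sum>k<n. w k * (2 * Imat k i)) = 2 * w i"
  proof -
    have "(\<Sum>k<n. w k * (2 * Imat k i)) = 2 * (\<Sum>k<n. w k * Imat k i)" by (simp add: sum_distrib_left algebra_simps)
    then show ?thesis using hI by simp
  qed
  have hZ2: "(\<Sum>k<n. w k * (2 * Zmat n k i)) = 2 * Z2 * w i"
  proof -
    have "(\<Sum>k<n. w k * (2 * Zmat n k i)) = 2 * (\<Sum>k<n. w k * Zmat n k i)" by (simp add: sum_distrib_left algebra_simps)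
    then show ?thesis using hZ by simp
  qed
  show ?thesis
    unfolding Mblock_def mco_def
    apply (simp only: sum_if_const hI hZ hI2 hZ2)
    apply (simp only: if_distrib[of "\<lambda>x. x * w i"] mult_1_left mult_zero_left sum.neutral_const mult_zero_right)
    done
qed

lemma rowmul_block:
  assumes v: "\<forall>p<n*n. v p = f (p div n) * w (p mod n)" and c: "c < n*n"
    and hw: "\<forall>i<n. rowmul n w (Zmat n) i = Z2 * w i"
  shows "rowmul (n*n) v (Mmat n) c = (\<Sum>a<n. f a * mco n Z2 a (c div n)) * w (c mod n)"
proof -
  have np: "0 < n" using c by (cases n) auto
  have im: "c mod n < n" using np by simp
  have "rowmul (n*n) v (Mmat n) c = (\<Sum>a<n. \<Sum>k<n. v (a*n+k) * Mmat n (a*n+k) c)"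
    by (simp add: rowmul_def blocksum)
  also have "\<dots> = (\<Sum>a<n. f a * (\<Sum>k<n. w k * Mblock n a (c div n) k (c mod n)))"
  proof (rule sum.cong[OF refl])
    fix a assume a: "a \<in> {..<n}"
    show "(\<Sum>k<n. v (a*n+k) * Mmat n (a*n+k) c) = f a * (\<Sum>k<n. w k * Mblock n a (c div n) k (c mod n))"
      unfolding sum_distrib_left
    proof (rule sum.cong[OF refl])
      fix k assume k: "k \<in> {..<n}"
      have "a*n+k < n*n"
      proof -
        have "a*n+k < a*n + n" using k by simp
        also have "\<dots> = (a+1)*n" by simp
        also have "\<dots> \<le> n*n" using a by (intro mult_right_mono) auto
        finally show ?thesis .
      qed
      moreover have "(a*n+k) div n = a" "(a*n+k) mod n = k" using k by auto
      ultimately show "v (a*n+k) * Mmat n (a*n+k) c = f a * (w k * Mblock n a (c div n) k (c mod n))"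
        using v by (simp add: Mmat_def)
    qed
  qed
  also have "\<dots> = (\<Sum>a<n. f a * mco n Z2 a (c div n)) * w (c mod n)"
    using inner[OF im hw] by (simp add: sum_distrib_right mult.assoc)
  finally show ?thesis .
qed

definition Fc :: "complex \<Rightarrow> complex \<Rightarrow> nat \<Rightarrow> complex" where
  "Fc Q t k = (if k = 0 then 1 else Q^k * chebL t k + of_nat k * Q^(k-1) * chebU t (k-1))"

definition Ec :: "complex \<Rightarrow> complex \<Rightarrow> nat \<Rightarrow> complex" where
  "Ec Q t k = (if k = 0 then 1 else Q^k * chebL t k)"

lemma chebL_U2: "chebL t (Suc m) = 2 * chebU t (Suc m) - t * chebU t m
   \<and> chebL t (Suc (Suc m)) = 2 * chebU t (Suc (Suc m)) - t * chebU t (Suc m)"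
proof (induction m)
  case 0
  then show ?case by (simp add: algebra_simps)
next
  case (Suc m)
  then have h1: "chebL t (Suc m) = 2 * chebU t (Suc m) - t * chebU t m"
    and h2: "chebL t (Suc (Suc m)) = 2 * chebU t (Suc (Suc m)) - t * chebU t (Suc m)" by auto
  have "chebL t (Suc (Suc (Suc m))) = t * chebL t (Suc (Suc m)) - chebL t (Suc m)" by simp
  also have "\<dots> = t * (2 * chebU t (Suc (Suc m)) - t * chebU t (Suc m)) - (2 * chebU t (Suc m) - t * chebU t m)"
    by (simp only: h1 h2)
  also have "\<dots> = 2 * chebU t (Suc (Suc (Suc m))) - t * chebU t (Suc (Suc m))"
    by (simp add: algebra_simps)
  finally show ?case using h2 by simp
qed

lemma chebL_U: "chebL t (Suc m) = 2 * chebU t (Suc m) - t * chebU t m"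
  using chebL_U2 by blast

lemma Fident: "Fc Q t (m+3) + Q^2 * Fc Q t (m+1) = Q*t*Fc Q t (m+2) + Ec Q t (m+2)"
proof -
  have e: "m+3 = Suc (Suc (Suc m))" "m+2 = Suc (Suc m)" "m+1 = Suc m" by auto
  show ?thesis unfolding Fc_def Ec_def e
    by (simp del: chebL.simps add: chebL_U algebra_simps power2_eq_square numeral_2_eq_2)
qed

lemma Eident: "Ec Q t (m+3) + Q^2 * Ec Q t (m+1) = Q*t*Ec Q t (m+2)"
proof -
  have e: "m+3 = Suc (Suc (Suc m))" "m+2 = Suc (Suc m)" "m+1 = Suc m" by auto
  show ?thesis unfolding Ec_def e
    by (simp del: chebL.simps add: chebL_U algebra_simps power2_eq_square numeral_2_eq_2)
qed

lemma cheb_closed: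
  fixes x y :: complex
  assumes xy: "x * y = 1"
  shows "chebL (x + y) k = x^k + y^k
     \<and> chebL (x + y) (Suc k) = x^(Suc k) + y ^ (Suc k)
     \<and> chebU (x + y) k * (x - y) = x^(Suc k) - y ^ (Suc k)
     \<and> chebU (x + y) (Suc k) * (x - y) = x^(Suc (Suc k)) - y ^ (Suc (Suc k))"
proof (induction k)
  case 0
  show ?case using xy by (simp add: algebra_simps power2_eq_square numeral_2_eq_2)
next
  case (Suc k)
  then have h1: "chebL (x + y) (Suc k) = x^(Suc k) + y ^ (Suc k)"
    and h2: "chebU (x + y) (Suc k) * (x - y) = x^(Suc (Suc k)) - y ^ (Suc (Suc k))"
    and h3: "chebL (x + y) k = x^k + y^k"
    and h4: "chebU (x + y) k * (x - y) = x^(Suc k) - y ^ (Suc k)" by auto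
  have L: "chebL (x + y) (Suc (Suc k)) = x^(Suc (Suc k)) + y ^ (Suc (Suc k))"
  proof -
    have "chebL (x + y) (Suc (Suc k)) = (x+y) * chebL (x + y) (Suc k) - chebL (x + y) k" by simp
    also have "\<dots> = (x+y) * (x^(Suc k) + y ^ (Suc k)) - (x^k + y^k)" by (simp only: h1 h3)
    also have "\<dots> = x^(Suc (Suc k)) + y ^ (Suc (Suc k)) + (x*y - 1) * (x^k + y^k)"
      by (simp add: algebra_simps)
    also have "\<dots> = x^(Suc (Suc k)) + y ^ (Suc (Suc k))" using xy by simp
    finally show ?thesis .
  qed
  have U: "chebU (x + y) (Suc (Suc k)) * (x - y) = x^(Suc (Suc (Suc k))) - y ^ (Suc (Suc (Suc k)))"
  proof -
    have "chebU (x + y) (Suc (Suc k)) * (x - y) = (x+y) * (chebU (x + y) (Suc k) * (x - y)) - chebU (x + y) k * (x - y)"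
      by (simp add: algebra_simps)
    also have "\<dots> = (x+y) * (x^(Suc (Suc k)) - y ^ (Suc (Suc k))) - (x^(Suc k) - y ^ (Suc k))" by (simp only: h2 h4)
    also have "\<dots> = x^(Suc (Suc (Suc k))) - y ^ (Suc (Suc (Suc k))) + (x*y - 1) * (x^(Suc k) - y^(Suc k))"
      by (simp add: algebra_simps)
    also have "\<dots> = x^(Suc (Suc (Suc k))) - y ^ (Suc (Suc (Suc k)))" using xy by simp
    finally show ?thesis .
  qed
  show ?case using L U h1 h2 by simp
qed

lemma delta1: fixes n c :: nat assumes "c < n" shows "(\<Sum>a<n. f a * (if a = c then X else 0)) = f c * (X::complex)"
proof -
  have "(\<Sum>a<n. f a * (if a = c then X else 0)) = (\<Sum>a<n. if a = c then f c * X else 0)"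
    by (rule sum.cong) auto
  also have "\<dots> = f c * X" using assms by (simp add: sum.delta)
  finally show ?thesis .
qed

lemma sum_delta2: fixes n c d :: nat shows "c < n \<Longrightarrow> d < n \<Longrightarrow>
   (\<Sum>a<n. f a * ((if a = c then X else 0) + (if a = d then Y else 0))) = f c * X + f d * (Y::complex)"
  by (simp only: distrib_left sum.distrib delta1)


lemma mco_eq: assumes "3 \<le> n" "a < n" "b < n"
  shows "mco n Z2 a b = (if a+1 = b then 1 else 0) + (if b+1 = a \<and> a+2 \<le> n then Z2 else 0)
     + (if a+1 = n \<and> b = 0 then 2 else 0) + (if a+1=n \<and> b+2 = n then 2*Z2 else 0)"
proof -
  have C1: "(a \<le> n - 2 \<and> b = a + 1) \<longleftrightarrow> a+1 = b" using assms by linarith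
  have C2: "(1 \<le> a \<and> a \<le> n - 2 \<and> b + 1 = a) \<longleftrightarrow> b+1 = a \<and> a+2 \<le> n" using assms by linarith
  have C3: "(a = n - 1 \<and> b = 0) \<longleftrightarrow> a+1 = n \<and> b = 0" using assms by linarith
  have C4: "(a = n - 1 \<and> b = n - 2) \<longleftrightarrow> a+1 = n \<and> b+2 = n" using assms by linarith
  have D: "mco n Z2 a b = (if a+1 = b then 1 else if b+1 = a \<and> a+2 \<le> n then Z2 else
       if a+1 = n \<and> b = 0 then 2 else if a+1=n \<and> b+2 = n then 2*Z2 else 0)"
    unfolding mco_def by (simp only: C1 C2 C3 C4)
  show ?thesis unfolding D using assms by auto
qed

lemma sumcase:
  assumes n: "3 \<le> n" and b: "b < n"
  shows "(\<Sum>a<n. f a * mco n Z2 a b) =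
    (if b = n-1 then f (n-2) else if b = n-2 then f (n-3) + f (n-1) * (2*Z2)
     else if b = 0 then f 1 * Z2 + f (n-1) * 2 else f (b-1) + f (b+1) * Z2)"
proof -
  consider "b = n-1" | "b = n-2" | "b = 0" | "1 \<le> b \<and> b \<le> n-3" using n b by linarith
  then show ?thesis
  proof cases
    case 1
    have "\<And>a. a<n \<Longrightarrow> mco n Z2 a b = (if a = n-2 then 1 else 0) + (if a = n-1 then 0 else 0)"
      using 1 n by (auto simp: mco_eq)
    then have "(\<Sum>a<n. f a * mco n Z2 a b) = (\<Sum>a<n. f a * ((if a = n-2 then 1 else 0) + (if a = n-1 then 0 else 0)))"
      by (intro sum.cong) auto
    also have "\<dots> = f (n-2)" using n by (subst sum_delta2) auto
    finally show ?thesis using 1 by simp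
  next
    case 2
    have "\<And>a. a<n \<Longrightarrow> mco n Z2 a b = (if a = n-3 then 1 else 0) + (if a = n-1 then 2*Z2 else 0)"
      using 2 n by (auto simp: mco_eq)
    then have "(\<Sum>a<n. f a * mco n Z2 a b) = (\<Sum>a<n. f a * ((if a = n-3 then 1 else 0) + (if a = n-1 then 2*Z2 else 0)))"
      by (intro sum.cong) auto
    also have "\<dots> = f (n-3) + f (n-1) * (2*Z2)" using n by (subst sum_delta2) auto
    finally show ?thesis using 2 n by simp
  next
    case 3
    have "\<And>a. a<n \<Longrightarrow> mco n Z2 a b = (if a = 1 then Z2 else 0) + (if a = n-1 then 2 else 0)"
      using 3 n by (auto simp: mco_eq)
    then have "(\<Sum>a<n. f a * mco n Z2 a b) = (\<Sum>a<n. f a * ((if a = 1 then Z2 else 0) + (if a = n-1 then 2 else 0)))"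
      by (intro sum.cong) auto
    also have "\<dots> = f 1 * Z2 + f (n-1) * 2" using n by (subst sum_delta2) auto
    finally show ?thesis using 3 n by simp
  next
    case 4
    have "\<And>a. a<n \<Longrightarrow> mco n Z2 a b = (if a = b-1 then 1 else 0) + (if a = b+1 then Z2 else 0)"
      using 4 n by (auto simp: mco_eq)
    then have "(\<Sum>a<n. f a * mco n Z2 a b) = (\<Sum>a<n. f a * ((if a = b-1 then 1 else 0) + (if a = b+1 then Z2 else 0)))"
      by (intro sum.cong) auto
    also have "\<dots> = f (b-1) + f (b+1) * Z2" using n 4 by (subst sum_delta2) auto
    moreover have "b \<noteq> n-1" "b \<noteq> n-2" "b \<noteq> 0" using 4 n by auto
    ultimately show ?thesis by simp
  qed
qed

lemma yblock_eq: "yblock q j r w k i = Fc (q^r) (q^j + inverse (q^j)) k * w i"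
proof (cases k)
  case 0 then show ?thesis by (simp add: yblock_def Fc_def)
next
  case (Suc k') note S = Suc
  show ?thesis
  proof (cases k')
    case 0 then show ?thesis using S by (simp add: yblock_def Fc_def algebra_simps)
  next
    case (Suc m)
    define t where "t = q^j + inverse (q^j)"
    have L: "chebL t (Suc (Suc m)) = chebU t (Suc (Suc m)) - chebU t m"
      using chebL_U[of t "Suc m"] by simp
    have p1: "q^(k*r) = (q^r)^k" "q^((k-1)*r) = (q^r)^(k-1)" by (simp_all add: power_mult[symmetric] mult.commute)
    show ?thesis using S Suc unfolding yblock_def Fc_def Let_def t_def[symmetric] p1
      by (simp add: L distrib_right del: chebL.simps chebU.simps)
  qed
qed

theorem mainTheorem17:
  fixes n j r :: nat and q :: complex and w :: "nat \<Rightarrow> complex"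
  assumes "n \<ge> 3" and "odd n"
    and "primitive_root n q"
    and "r < n"
    and "1 \<le> j" and "2 * j \<le> n - 1"
    and "\<exists>i<n. w i \<noteq> 0"
    and "\<forall>i<n. rowmul n w (Zmat n) i = q ^ (2 * r) * w i"
  shows "(\<forall>c<n*n. rowmul (n*n) (yvec n q j r w) (Mmat n) c
                    = lam q j r * yvec n q j r w c + wvec n q j r w c)
       \<and> (\<forall>c<n*n. rowmul (n*n) (wvec n q j r w) (Mmat n) c = lam q j r * wvec n q j r w c)
       \<and> (\<exists>c<n*n. wvec n q j r w c \<noteq> 0)"
proof -
  note n3 = assms(1)
  define t where "t = q^j + inverse (q^j)"
  define Q where "Q = q^r"
  define x where "x = q^j"
  define y where "y = inverse (q^j)"
  have qn: "q^n = 1" using assms(3) by (simp add: primitive_root_def)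
  have q0: "q \<noteq> 0" using qn n3 by (cases "q = 0") (auto simp: power_0_left)
  have xy: "x * y = 1" using q0 by (simp add: x_def y_def)
  have txy: "t = x + y" by (simp add: t_def x_def y_def)
  have xn: "x^n = 1" unfolding x_def by (metis power_mult mult.commute qn power_one)
  have yn: "y^n = 1" unfolding y_def by (metis power_inverse xn x_def inverse_1)
  have Qn: "Q^n = 1" unfolding Q_def by (metis power_mult mult.commute qn power_one)
  have hw: "\<forall>i<n. rowmul n w (Zmat n) i = Q^2 * w i"
    using assms(8) unfolding Q_def by (simp add: power_mult[symmetric] mult.commute)
  have xny: "x \<noteq> y"
  proof
    assume "x = y"
    then have "x * x = 1" using xy by simp
    then have "q^(2*j) = 1" unfolding x_def by (simp add: power_mult_distrib power_add[symmetric] mult_2)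
    moreover have "0 < 2*j" "2*j < n" using assms(5,6) n3 by auto
    ultimately show False using assms(3) by (auto simp: primitive_root_def)
  qed
  have Ln: "chebL t n = 2" using cheb_closed[OF xy, of n] xn yn txy by simp
  have "chebU t (n-1) * (x - y) = 0"
    using cheb_closed[OF xy, of "n-1"] xn yn txy n3 by simp
  then have Un: "chebU t (n-1) = 0" using xny by simp
  have Fn: "Fc Q t n = 2" using Ln Un Qn n3 by (simp add: Fc_def)
  have En: "Q^n * chebL t n = 2" using Ln Qn by simp
  have lamQ: "lam q j r = Q * t" by (simp add: lam_def Q_def t_def)
  have yv: "\<forall>p<n*n. yvec n q j r w p = Fc Q t (n-1-p div n) * w (p mod n)"
    by (simp add: yvec_def yblock_eq Q_def t_def)
  have wv: "\<forall>p<n*n. wvec n q j r w p = Ec Q t (n-1-p div n) * w (p mod n)"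
  proof (intro allI impI)
    fix p assume p: "p < n*n"
    then have pd: "p div n < n" by (simp add: less_mult_imp_div_less)
    have e: "q ^ (k * r) = Q^k" for k by (simp add: Q_def power_mult[symmetric] mult.commute)
    show "wvec n q j r w p = Ec Q t (n-1-p div n) * w (p mod n)"
      using pd by (auto simp: wvec_def Ec_def Let_def e t_def)
  qed
  obtain m where m: "n = m + 3" using n3 by (metis add.commute le_Suc_ex)
  have c1: "\<forall>c<n*n. rowmul (n*n) (yvec n q j r w) (Mmat n) c
                    = lam q j r * yvec n q j r w c + wvec n q j r w c"
  proof (intro allI impI)
    fix c assume c: "c < n*n"
    define b where "b = c div n"
    have b: "b < n" using c by (simp add: b_def less_mult_imp_div_less)
    let ?f = "\<lambda>a. Fc Q t (n-1-a)"
    have R: "rowmul (n*n) (yvec n q j r w) (Mmat n) c = (\<Sum>a<n. ?f a * mco n (Q^2) a b) * w (c mod n)"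
      unfolding b_def by (rule rowmul_block[OF yv c hw])
    have S: "(\<Sum>a<n. ?f a * mco n (Q^2) a b) = Q*t*?f b + Ec Q t (n-1-b)"
    proof -
      note SC = sumcase[OF n3 b, of ?f "Q^2"]
      consider "b = n-1" | "b = n-2" | "b = 0" | "1 \<le> b \<and> b \<le> n-3" using n3 b by linarith
      then show ?thesis
      proof cases
        case 1
        have "n-1-(n-2) = 1" using n3 by simp
        then show ?thesis unfolding SC using 1 n3 by (simp add: Fc_def Ec_def algebra_simps)
      next
        case 2
        have "n-1-(n-3) = 2" "n-1-(n-2) = 1" "n-2 \<noteq> n-1" using n3 by auto
        then show ?thesis unfolding SC using 2 n3 by (simp add: Fc_def Ec_def algebra_simps power2_eq_square numeral_2_eq_2)
      next
        case 3
        have e: "n-1-1 = m+1" "n-1 = m+2" using m by auto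
        have A: "?f 1 = Fc Q t (m+1)" "?f (n-1) = 1" using m by (simp_all add: Fc_def)
        have "b \<noteq> n-1" "b \<noteq> n-2" using 3 n3 by auto
        then have "(\<Sum>a<n. ?f a * mco n (Q^2) a b) = Fc Q t (m+1) * Q^2 + 2"
          unfolding SC using 3 A by simp
        also have "\<dots> = Fc Q t (m+3) + Q^2 * Fc Q t (m+1)" using Fn m by (simp add: mult.commute)
        also have "\<dots> = Q*t*Fc Q t (m+2) + Ec Q t (m+2)" by (rule Fident)
        moreover have fb: "Ec Q t (n-1-b) = Ec Q t (m+2)" "Fc Q t (n-1-b) = Fc Q t (m+2)" using 3 e(2) by simp_all
        ultimately show ?thesis by (simp only: fb)
      next
        case 4
        define k where "k = n-3-b"
        have k: "n-1-b = k+2" using 4 n3 unfolding k_def by linarith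
        have e: "n-1-(b-1) = k+3" "n-1-(b+1) = k+1" using k 4 by auto
        have A: "?f (b-1) = Fc Q t (k+3)" "?f (b+1) = Fc Q t (k+1)" by (simp_all only: e)
        have "b \<noteq> n-1" "b \<noteq> n-2" "b \<noteq> 0" using 4 n3 by auto
        then have "(\<Sum>a<n. ?f a * mco n (Q^2) a b) = Fc Q t (k+3) + Fc Q t (k+1) * Q^2"
          unfolding SC using A by simp
        also have "\<dots> = Q*t*Fc Q t (k+2) + Ec Q t (k+2)" using Fident[of Q t k] by (simp add: algebra_simps)
        finally show ?thesis using k by simp
      qed
    qed
    show "rowmul (n*n) (yvec n q j r w) (Mmat n) c = lam q j r * yvec n q j r w c + wvec n q j r w c"
      using R S yv wv c by (simp add: lamQ b_def algebra_simps)
  qed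
  have c2: "\<forall>c<n*n. rowmul (n*n) (wvec n q j r w) (Mmat n) c = lam q j r * wvec n q j r w c"
  proof (intro allI impI)
    fix c assume c: "c < n*n"
    define b where "b = c div n"
    have b: "b < n" using c by (simp add: b_def less_mult_imp_div_less)
    let ?f = "\<lambda>a. Ec Q t (n-1-a)"
    have R: "rowmul (n*n) (wvec n q j r w) (Mmat n) c = (\<Sum>a<n. ?f a * mco n (Q^2) a b) * w (c mod n)"
      unfolding b_def by (rule rowmul_block[OF wv c hw])
    have S: "(\<Sum>a<n. ?f a * mco n (Q^2) a b) = Q*t*?f b"
    proof -
      note SC = sumcase[OF n3 b, of ?f "Q^2"]
      consider "b = n-1" | "b = n-2" | "b = 0" | "1 \<le> b \<and> b \<le> n-3" using n3 b by linarith
      then show ?thesis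
      proof cases
        case 1
        have "n-1-(n-2) = 1" using n3 by simp
        then show ?thesis unfolding SC using 1 n3 by (simp add: Ec_def algebra_simps)
      next
        case 2
        have "n-1-(n-3) = 2" "n-1-(n-2) = 1" "n-2 \<noteq> n-1" using n3 by auto
        then show ?thesis unfolding SC using 2 n3 by (simp add: Ec_def algebra_simps power2_eq_square numeral_2_eq_2)
      next
        case 3
        have e: "n-1-1 = m+1" "n-1 = m+2" using m by auto
        have A: "?f 1 = Ec Q t (m+1)" "?f (n-1) = 1" using m by (simp_all add: Ec_def)
        have "b \<noteq> n-1" "b \<noteq> n-2" using 3 n3 by auto
        then have "(\<Sum>a<n. ?f a * mco n (Q^2) a b) = Ec Q t (m+1) * Q^2 + 2"
          unfolding SC using 3 A by simp
        also have "\<dots> = Ec Q t (m+3) + Q^2 * Ec Q t (m+1)" using En m by (simp add: mult.commute Ec_def)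
        also have "\<dots> = Q*t*Ec Q t (m+2)" by (rule Eident)
        moreover have fb: "Ec Q t (n-1-b) = Ec Q t (m+2)" "Fc Q t (n-1-b) = Fc Q t (m+2)" using 3 e(2) by simp_all
        ultimately show ?thesis by (simp only: fb)
      next
        case 4
        define k where "k = n-3-b"
        have k: "n-1-b = k+2" using 4 n3 unfolding k_def by linarith
        have e: "n-1-(b-1) = k+3" "n-1-(b+1) = k+1" using k 4 by auto
        have A: "?f (b-1) = Ec Q t (k+3)" "?f (b+1) = Ec Q t (k+1)" by (simp_all only: e)
        have "b \<noteq> n-1" "b \<noteq> n-2" "b \<noteq> 0" using 4 n3 by auto
        then have "(\<Sum>a<n. ?f a * mco n (Q^2) a b) = Ec Q t (k+3) + Ec Q t (k+1) * Q^2"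
          unfolding SC using A by simp
        also have "\<dots> = Q*t*Ec Q t (k+2)" using Eident[of Q t k] by (simp add: algebra_simps)
        finally show ?thesis using k by simp
      qed
    qed
    show "rowmul (n*n) (wvec n q j r w) (Mmat n) c = lam q j r * wvec n q j r w c"
      using R S wv c by (simp add: lamQ b_def algebra_simps)
  qed
  have c3: "\<exists>c<n*n. wvec n q j r w c \<noteq> 0"
  proof -
    obtain i where i: "i < n" "w i \<noteq> 0" using assms(7) by blast
    define c where "c = (n-1)*n + i"
    have "c < n*n"
    proof -
      have "c < (n-1)*n + n" using i by (simp add: c_def)
      also have "\<dots> = n*n" using n3 by (cases n) auto
      finally show ?thesis .
    qed
    moreover have "c div n = n-1" "c mod n = i" using i by (auto simp: c_def)
    ultimately show ?thesis using i by (intro exI[of _ c]) (simp add: wvec_def Let_def)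
  qed
  show ?thesis using c1 c2 c3 by blast
qed

end
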